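(* In $\mathbb{C}^3\otimes\mathbb{C}^2\otimes\mathbb{C}^2$ there are exactly two SLOCC equivalence classes of SLOCC maximal states, represented by $|\Phi_1\rangle=|0\rangle|00\rangle+|1\rangle|01\rangle+|2\rangle|11\rangle$ and $|\Phi_2\rangle=|0\rangle|00\rangle+|1\rangle(|01\rangle+|10\rangle)+|2\rangle|11\rangle$, where the first ket is in $\mathbb{C}^3$ and the two-qubit ket is in $\mathbb{C}^2\otimes\mathbb{C}^2$.
   Context: $|\psi\rangle\le_{\mathrm{SLOCC}}|\phi\rangle$ means $(L_1\otimes L_2\otimes L_3)|\phi\rangle=|\psi\rangle$ for some linear operators $L_i$ on the respective factors; SLOCC equivalence means mutual $\le_{\mathrm{SLOCC}}$ (equivalently relation by invertible local operators). A state $|\phi\rangle$ is SLOCC maximal if for every $|\psi\rangle$ in the space, $|\phi\rangle\le_{\mathrm{SLOCC}}|\psi\rangle$ implies $|\psi\rangle\le_{\mathrm{SLOCC}}|\phi\rangle$. $\{|0\rangle,|1\rangle,\dots\}$ denote standard orthonormal bases. *)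

theory Defs
  imports Complex_Main "HOL-Library.Numeral_Type"
begin

text \<open>A state of C^3 (x) C^2 (x) C^2 is its coefficient array
  phi i j k = coefficient of |i>|jk>, indices in the finite types 3, 2, 2.
  Linear operators on C^n are n x n complex matrices (as functions).\<close>

type_synonym state = "3 \<Rightarrow> 2 \<Rightarrow> 2 \<Rightarrow> complex"

definition loc_apply ::
  "(3 \<Rightarrow> 3 \<Rightarrow> complex) \<Rightarrow> (2 \<Rightarrow> 2 \<Rightarrow> complex) \<Rightarrow> (2 \<Rightarrow> 2 \<Rightarrow> complex) \<Rightarrow> state \<Rightarrow> state" where
  "loc_apply L1 L2 L3 phi =
     (\<lambda>i j k. \<Sum>a\<in>UNIV. \<Sum>b\<in>UNIV. \<Sum>c\<in>UNIV. L1 i a * L2 j b * L3 k c * phi a b c)"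

definition slocc_le :: "state \<Rightarrow> state \<Rightarrow> bool" where
  "slocc_le psi phi \<longleftrightarrow> (\<exists>L1 L2 L3. loc_apply L1 L2 L3 phi = psi)"

definition slocc_equiv :: "state \<Rightarrow> state \<Rightarrow> bool" where
  "slocc_equiv psi phi \<longleftrightarrow> slocc_le psi phi \<and> slocc_le phi psi"

definition slocc_maximal :: "state \<Rightarrow> bool" where
  "slocc_maximal phi \<longleftrightarrow> (\<forall>psi. slocc_le phi psi \<longrightarrow> slocc_le psi phi)"

definition Phi1 :: state where
  "Phi1 = (\<lambda>i j k. if (i, j, k) \<in> {(0, 0, 0), (1, 0, 1), (2, 1, 1)} then 1 else 0)"

definition Phi2 :: state where
  "Phi2 = (\<lambda>i j k. if (i, j, k) \<in> {(0, 0, 0), (1, 0, 1), (1, 1, 0), (2, 1, 1)} then 1 else 0)"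

end

theory Submission
  imports Defs "HOL-Analysis.Analysis"
begin

lemma ex2: "(j::2) = 0 \<or> j = 1"
proof -
  have "(2::2) = 0" by simp
  then show ?thesis using exhaust_2[of j] by metis
qed
lemma ex3: "(j::3) = 0 \<or> j = 1 \<or> j = 2"
proof -
  have "(3::3) = 0" by simp
  then show ?thesis using exhaust_3[of j] by metis
qed
lemma UNIV2: "(UNIV::2 set) = {0,1}" using ex2 by blast
lemma UNIV3: "(UNIV::3 set) = {0,1,2}" using ex3 by blast
lemma n2: "(0::2) \<noteq> 1" by simp
lemma n3: "(0::3) \<noteq> 1" "(0::3) \<noteq> 2" "(1::3) \<noteq> 2" by simp_all
lemma sum2: "sum f (UNIV::2 set) = f 0 + f 1"
  unfolding UNIV2 by (subst sum.insert) (auto simp: n2)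
lemma sum3: "sum f (UNIV::3 set) = f 0 + f 1 + f 2"
proof -
  have "sum f {0,1,2::3} = f 0 + sum f {1,2}" by (rule sum.insert) (auto simp: n3)
  moreover have "sum f {1,2::3} = f 1 + f 2" by (rule trans[OF sum.insert]) (auto simp: n3)
  ultimately show ?thesis unfolding UNIV3 by (simp add: add.assoc)
qed
lemma n3b: "(1::3) \<noteq> 0" "(2::3) \<noteq> 0" "(2::3) \<noteq> 1" "(1::2) \<noteq> 0" by simp_all
lemma P1: "Phi1 0 0 0 = 1" "Phi1 0 0 1 = 0" "Phi1 0 1 0 = 0" "Phi1 0 1 1 = 0"
     "Phi1 1 0 0 = 0" "Phi1 1 0 1 = 1" "Phi1 1 1 0 = 0" "Phi1 1 1 1 = 0"
     "Phi1 2 0 0 = 0" "Phi1 2 0 1 = 0" "Phi1 2 1 0 = 0" "Phi1 2 1 1 = 1"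
  by (simp_all add: Phi1_def n3 n3b n2)
lemma P2: "Phi2 0 0 0 = 1" "Phi2 0 0 1 = 0" "Phi2 0 1 0 = 0" "Phi2 0 1 1 = 0"
     "Phi2 1 0 0 = 0" "Phi2 1 0 1 = 1" "Phi2 1 1 0 = 1" "Phi2 1 1 1 = 0"
     "Phi2 2 0 0 = 0" "Phi2 2 0 1 = 0" "Phi2 2 1 0 = 0" "Phi2 2 1 1 = 1"
  by (simp_all add: Phi2_def n3 n3b n2)
lemma loc_Phi1: "loc_apply L1 L2 L3 Phi1 i j k =
   L2 j 0 * L1 i 0 * L3 k 0 + L2 j 0 * L1 i 1 * L3 k 1 + L2 j 1 * L1 i 2 * L3 k 1"
  unfolding loc_apply_def sum2 sum3 P1 by (simp add: algebra_simps)
lemma loc_Phi2: "loc_apply L1 L2 L3 Phi2 i j k =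
   L2 j 0 * L1 i 0 * L3 k 0 + L1 i 1 * (L2 j 0 * L3 k 1 + L2 j 1 * L3 k 0) + L2 j 1 * L1 i 2 * L3 k 1"
  unfolding loc_apply_def sum2 sum3 P2 by (simp add: algebra_simps)

definition ap1 :: "(3 \<Rightarrow> 3 \<Rightarrow> complex) \<Rightarrow> state \<Rightarrow> state" where
  "ap1 L phi = (\<lambda>i j k. \<Sum>a\<in>UNIV. L i a * phi a j k)"
definition ap2 :: "(2 \<Rightarrow> 2 \<Rightarrow> complex) \<Rightarrow> state \<Rightarrow> state" where
  "ap2 L phi = (\<lambda>i j k. \<Sum>a\<in>UNIV. L j a * phi i a k)"
definition ap3 :: "(2 \<Rightarrow> 2 \<Rightarrow> complex) \<Rightarrow> state \<Rightarrow> state" where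
  "ap3 L phi = (\<lambda>i j k. \<Sum>a\<in>UNIV. L k a * phi i j a)"

lemma loc_fact: "loc_apply L1 L2 L3 phi = ap1 L1 (ap2 L2 (ap3 L3 phi))"
  unfolding loc_apply_def ap1_def ap2_def ap3_def by (simp add: sum_distrib_left mult.assoc)

lemma ap1c: "ap1 L (ap1 M phi) = ap1 (\<lambda>i a. \<Sum>m\<in>UNIV. L i m * M m a) phi"
  unfolding ap1_def by (rule ext)+ (simp add: sum2 sum3 algebra_simps)
lemma ap2c: "ap2 L (ap2 M phi) = ap2 (\<lambda>i a. \<Sum>m\<in>UNIV. L i m * M m a) phi"
  unfolding ap2_def by (rule ext)+ (simp add: sum2 sum3 algebra_simps)
lemma ap3c: "ap3 L (ap3 M phi) = ap3 (\<lambda>i a. \<Sum>m\<in>UNIV. L i m * M m a) phi"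
  unfolding ap3_def by (rule ext)+ (simp add: sum2 sum3 algebra_simps)
lemma ap12: "ap1 L (ap2 M phi) = ap2 M (ap1 L phi)"
  unfolding ap1_def ap2_def by (rule ext)+ (simp add: sum2 sum3 algebra_simps)
lemma ap13: "ap1 L (ap3 M phi) = ap3 M (ap1 L phi)"
  unfolding ap1_def ap3_def by (rule ext)+ (simp add: sum2 sum3 algebra_simps)
lemma ap23: "ap2 L (ap3 M phi) = ap3 M (ap2 L phi)"
  unfolding ap2_def ap3_def by (rule ext)+ (simp add: sum2 sum3 algebra_simps)

lemma trans_le:
  assumes "slocc_le a b" "slocc_le b c" shows "slocc_le a c"
proof -
  obtain L1 L2 L3 where a: "a = loc_apply L1 L2 L3 b" using assms(1) unfolding slocc_le_def by metis
  obtain M1 M2 M3 where b: "b = loc_apply M1 M2 M3 c" using assms(2) unfolding slocc_le_def by metis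
  have "a = ap1 L1 (ap2 L2 (ap3 L3 (ap1 M1 (ap2 M2 (ap3 M3 c)))))" unfolding a b loc_fact by (rule refl)
  also have "\<dots> = ap1 L1 (ap1 M1 (ap2 L2 (ap2 M2 (ap3 L3 (ap3 M3 c)))))"
    by (simp only: ap13[symmetric] ap12[symmetric] ap23)
  also have "\<dots> = loc_apply (\<lambda>i a. \<Sum>m\<in>UNIV. L1 i m * M1 m a) (\<lambda>i a. \<Sum>m\<in>UNIV. L2 i m * M2 m a)
      (\<lambda>i a. \<Sum>m\<in>UNIV. L3 i m * M3 m a) c"
    unfolding loc_fact ap1c ap2c ap3c by (rule refl)
  finally show ?thesis unfolding slocc_le_def by blast
qed


lemma not_Phi2_le_Phi1: "\<not> slocc_le Phi2 Phi1"
proof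
  assume "slocc_le Phi2 Phi1"
  then obtain L1 L2 L3 where H: "loc_apply L1 L2 L3 Phi1 = Phi2" unfolding slocc_le_def by blast
  have e: "L2 j 0 * L1 i 0 * L3 k 0 + L2 j 0 * L1 i 1 * L3 k 1 + L2 j 1 * L1 i 2 * L3 k 1 = Phi2 i j k"
    for i j k using loc_Phi1[of L1 L2 L3 i j k] H by simp
  define a00 a01 a10 a11 where "a00 = L2 0 0" "a01 = L2 0 1" "a10 = L2 1 0" "a11 = L2 1 1"
  define c00 c01 c10 c11 where "c00 = L3 0 0" "c01 = L3 0 1" "c10 = L3 1 0" "c11 = L3 1 1"
    have key: "(-a10)*c11 * Phi2 i 0 0 + (-a10)*(-c01)*Phi2 i 0 1 + a00*c11*Phi2 i 1 0 + a00*(-c01)*Phi2 i 1 1 = 0" for i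
    unfolding a00_a01_a10_a11_def c00_c01_c10_c11_def e[symmetric] by (simp add: algebra_simps)
  have k0: "a10 * c11 = 0" using key[of 0] P2 by simp
  have k1: "a10 * c01 + a00 * c11 = 0" using key[of 1] P2 by (simp add: algebra_simps)
  have k2: "a00 * c01 = 0" using key[of 2] P2 by simp
  have "(a10 = 0 \<and> a00 = 0) \<or> (c11 = 0 \<and> c01 = 0)"
    using k0 k1 k2 by auto
  then show False
  proof
    assume z: "a10 = 0 \<and> a00 = 0"
    have "L2 0 1 * L1 0 2 * L3 0 1 = 1" using e[of 0 0 0] P2 z a00_a01_a10_a11_def by simp
    moreover have "L2 0 1 * L1 2 2 * L3 1 1 = 0" using e[of 0 2 1] P2 z a00_a01_a10_a11_def by simp
    moreover have "L2 1 1 * L1 2 2 * L3 1 1 = 1" using e[of 1 2 1] P2 z a00_a01_a10_a11_def by simp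
    ultimately show False by auto
  next
    assume z: "c11 = 0 \<and> c01 = 0"
    have "L2 0 0 * L1 0 0 * L3 0 0 = 1" using e[of 0 0 0] P2 z c00_c01_c10_c11_def by simp
    moreover have "L2 0 0 * L1 0 0 * L3 1 0 = 0" using e[of 0 0 1] P2 z c00_c01_c10_c11_def by simp
    moreover have "L2 1 0 * L1 2 0 * L3 1 0 = 1" using e[of 1 2 1] P2 z c00_c01_c10_c11_def by simp
    ultimately show False by auto
  qed
qed

lemma not_Phi1_le_Phi2: "\<not> slocc_le Phi1 Phi2"
proof
  assume "slocc_le Phi1 Phi2"
  then obtain L1 L2 L3 where H: "loc_apply L1 L2 L3 Phi2 = Phi1" unfolding slocc_le_def by blast
  have e: "L2 j 0 * L1 i 0 * L3 k 0 + L1 i 1 * (L2 j 0 * L3 k 1 + L2 j 1 * L3 k 0) + L2 j 1 * L1 i 2 * L3 k 1 = Phi1 i j k"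
    for i j k using loc_Phi2[of L1 L2 L3 i j k] H by simp
    define a00 a01 a10 a11 where "a00 = L2 0 0" "a01 = L2 0 1" "a10 = L2 1 0" "a11 = L2 1 1"
  define c00 c01 c10 c11 where "c00 = L3 0 0" "c01 = L3 0 1" "c10 = L3 1 0" "c11 = L3 1 1"
  note defs = a00_a01_a10_a11_def c00_c01_c10_c11_def
  (* row annihilators of L2 *)
  have r1: "a10 * Phi1 i 0 k - a00 * Phi1 i 1 k = (-(a00*a11 - a01*a10)) * (L1 i 1 * L3 k 0 + L1 i 2 * L3 k 1)" for i k
    unfolding defs e[symmetric] by (simp add: algebra_simps)
  have r2: "a11 * Phi1 i 0 k - a01 * Phi1 i 1 k = (a00*a11 - a01*a10) * (L1 i 0 * L3 k 0 + L1 i 1 * L3 k 1)" for i k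
    unfolding defs e[symmetric] by (simp add: algebra_simps)
  have d2: "a00*a11 - a01*a10 \<noteq> 0"
  proof
    assume d: "a00*a11 - a01*a10 = 0"
    have "a10 = 0" using r1[of 0 0] d P1 by simp
    moreover have "a00 = 0" using r1[of 2 1] d P1 by simp
    moreover have "a11 = 0" using r2[of 0 0] d P1 by simp
    moreover have "a01 = 0" using r2[of 2 1] d P1 by simp
    ultimately show False using e[of 0 0 0] P1 defs by simp
  qed
  have s1: "c10 * Phi1 i j 0 - c00 * Phi1 i j 1 = (-(c00*c11 - c01*c10)) * (L1 i 1 * L2 j 0 + L1 i 2 * L2 j 1)" for i j
    unfolding defs e[symmetric] by (simp add: algebra_simps)
  have s2: "c11 * Phi1 i j 0 - c01 * Phi1 i j 1 = (c00*c11 - c01*c10) * (L1 i 0 * L2 j 0 + L1 i 1 * L2 j 1)" for i j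
    unfolding defs e[symmetric] by (simp add: algebra_simps)
  have d3: "c00*c11 - c01*c10 \<noteq> 0"
  proof
    assume d: "c00*c11 - c01*c10 = 0"
    have "c10 = 0" using s1[of 0 0] d P1 by simp
    moreover have "c00 = 0" using s1[of 2 1] d P1 by simp
    moreover have "c11 = 0" using s2[of 0 0] d P1 by simp
    moreover have "c01 = 0" using s2[of 2 1] d P1 by simp
    ultimately show False using e[of 0 0 0] P1 defs by simp
  qed
  (* antisymmetric part vanishes: adj L2 M adj L3^T symmetric *)
  have key: "(a11*(-c10) - (-a10)*c11) * Phi1 i 0 0 + (a11*c00 - (-a10)*(-c01)) * Phi1 i 0 1
     + ((-a01)*(-c10) - a00*c11) * Phi1 i 1 0 + ((-a01)*c00 - a00*(-c01)) * Phi1 i 1 1 = 0" for i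
    unfolding defs e[symmetric] by (simp add: algebra_simps)
  have k0: "a10*c11 - a11*c10 = 0" using key[of 0] P1 by (simp add: algebra_simps)
  have k1: "a11*c00 - a10*c01 = 0" using key[of 1] P1 by (simp add: algebra_simps)
  have "(c00*c11 - c01*c10) * a11 = c11*(a11*c00 - a10*c01) + c01*(a10*c11 - a11*c10)"
    by (simp add: algebra_simps)
  then have "a11 = 0" using k0 k1 d3 by simp
  moreover have "(c00*c11 - c01*c10) * a10 = c10*(a11*c00 - a10*c01) + c00*(a10*c11 - a11*c10)"
    by (simp add: algebra_simps)
  then have "a10 = 0" using k0 k1 d3 by simp
  ultimately show False using d2 by simp
qed


lemma lin2: "(c::complex) \<noteq> 0 \<Longrightarrow> X*p - Y*q = Z*c \<Longrightarrow> X*(p/c) + Y*(-q/c) = Z"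
  by (simp add: field_simps)
lemma lin2': "(c::complex) \<noteq> 0 \<Longrightarrow> Y*q - X*p = Z*c \<Longrightarrow> X*(-p/c) + Y*(q/c) = Z"
  by (simp add: field_simps)

lemma le_Phi2:
  fixes p00 p01 p10 p11 :: complex
  assumes d: "p00*p11 - p01*p10 \<noteq> 0"
    and sym: "\<And>i. p00*phi i 0 1 + p01*phi i 1 1 = p10*phi i 0 0 + p11*phi i 1 0"
  shows "slocc_le phi Phi2"
proof -
  define d where "d = p00*p11 - p01*p10"
  define L1 where "L1 = (\<lambda>i (a::3). if a = 0 then p00*phi i 0 0 + p01*phi i 1 0
      else if a = 1 then p00*phi i 0 1 + p01*phi i 1 1 else p10*phi i 0 1 + p11*phi i 1 1)"
  define L2 where "L2 = (\<lambda>(j::2) (b::2). if j = 0 then (if b = 0 then p11/d else -p01/d)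
      else (if b = 0 then -p10/d else p00/d))"
  define L3 where "L3 = (\<lambda>(k::2) (c::2). if k = c then (1::complex) else 0)"
  have dn: "d \<noteq> 0" using d d_def by simp
  have L2v: "L2 0 0 = p11/d" "L2 0 1 = -p01/d" "L2 1 0 = -p10/d" "L2 1 1 = p00/d" by (simp_all add: L2_def)
  have "loc_apply L1 L2 L3 Phi2 i j k = phi i j k" for i j k
  proof -
    define Y where "Y = (\<lambda>(b::2) (k::2). if b = 0 then p00*phi i 0 k + p01*phi i 1 k else p10*phi i 0 k + p11*phi i 1 k)"
    have l1: "L1 i 0 = Y 0 0" "L1 i 2 = Y 1 1" "L1 i 1 = Y 0 1" "L1 i 1 = Y 1 0"
      using sym[of i] by (simp_all add: L1_def Y_def)
    have st: "loc_apply L1 L2 L3 Phi2 i j k = L2 j 0 * Y 0 k + L2 j 1 * Y 1 k"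
      using ex2[of k] apply (elim disjE)
      subgoal by (simp add: loc_Phi2 l1(1,2,4) L3_def algebra_simps)
      subgoal by (simp add: loc_Phi2 l1(1,2,3) L3_def algebra_simps)
      done
    have "L2 j 0 * Y 0 k + L2 j 1 * Y 1 k = phi i j k"
      using ex2[of j]
    proof (elim disjE)
      assume j: "j = 0"
      have "Y 0 k * (p11/d) + Y 1 k * (-p01/d) = phi i 0 k"
        by (rule lin2[OF dn]) (simp add: Y_def d_def algebra_simps)
      then show ?thesis unfolding j L2v by (simp add: algebra_simps)
    next
      assume j: "j = 1"
      have "Y 0 k * (-p10/d) + Y 1 k * (p00/d) = phi i 1 k"
        by (rule lin2'[OF dn]) (simp add: Y_def d_def algebra_simps)
      then show ?thesis unfolding j L2v by (simp add: algebra_simps)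
    qed
    then show ?thesis using st by simp
  qed
  then show ?thesis unfolding slocc_le_def by blast
qed

lemma le_Phi1_gen:
  fixes g0 g1 w0 w1 v0 v1 h0 h1 :: complex
  assumes dA: "g0*w1 - g1*w0 \<noteq> 0" and dC: "v0*h1 - v1*h0 \<noteq> 0"
    and orth: "\<And>i. w0*(phi i 0 0 * v0 + phi i 0 1 * v1) + w1*(phi i 1 0 * v0 + phi i 1 1 * v1) = 0"
  shows "slocc_le phi Phi1"
proof -
  define a where "a = g0*w1 - g1*w0"
  define c where "c = v0*h1 - v1*h0"
  define R where "R = (\<lambda>i (b::2) (k::2). if b = 0 then g0*phi i 0 k + g1*phi i 1 k else w0*phi i 0 k + w1*phi i 1 k)"
  define U where "U = (\<lambda>i (b::2) (cc::2). R i b 0 * (if cc = 0 then v0 else h0) + R i b 1 * (if cc = 0 then v1 else h1))"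
  define L1 where "L1 = (\<lambda>i (x::3). if x = 0 then U i 0 0 else if x = 1 then U i 0 1 else U i 1 1)"
  define L2 where "L2 = (\<lambda>(j::2) (b::2). if j = 0 then (if b = 0 then w1/a else -g1/a)
      else (if b = 0 then -w0/a else g0/a))"
  define L3 where "L3 = (\<lambda>(k::2) (b::2). if k = 0 then (if b = 0 then h1/c else -v1/c)
      else (if b = 0 then -h0/c else v0/c))"
  have an: "a \<noteq> 0" using dA a_def by simp
  have cn: "c \<noteq> 0" using dC c_def by simp
  have L3v: "L3 0 0 = h1/c" "L3 0 1 = -v1/c" "L3 1 0 = -h0/c" "L3 1 1 = v0/c" by (simp_all add: L3_def)
  have L2v: "L2 0 0 = w1/a" "L2 0 1 = -g1/a" "L2 1 0 = -w0/a" "L2 1 1 = g0/a" by (simp_all add: L2_def)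
  have "loc_apply L1 L2 L3 Phi1 i j k = phi i j k" for i j k
  proof -
    have l1: "L1 i 0 = U i 0 0" "L1 i 1 = U i 0 1" "L1 i 2 = U i 1 1" by (simp_all add: L1_def)
    have u10: "U i 1 0 = 0" using orth[of i] by (simp add: U_def R_def algebra_simps)
    have s1: "U i b 0 * L3 k 0 + U i b 1 * L3 k 1 = R i b k" for b
      using ex2[of k]
    proof (elim disjE)
      assume k: "k = 0"
      show ?thesis unfolding k L3v
        by (rule lin2[OF cn]) (simp add: U_def c_def algebra_simps)
    next
      assume k: "k = 1"
      show ?thesis unfolding k L3v
        by (rule lin2'[OF cn]) (simp add: U_def c_def algebra_simps)
    qed
    have s2: "L2 j 0 * R i 0 k + L2 j 1 * R i 1 k = phi i j k"
      using ex2[of j]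
    proof (elim disjE)
      assume j: "j = 0"
      have "R i 0 k * (w1/a) + R i 1 k * (-g1/a) = phi i 0 k"
        by (rule lin2[OF an]) (simp add: R_def a_def algebra_simps)
      then show ?thesis unfolding j L2v by (simp add: algebra_simps)
    next
      assume j: "j = 1"
      have "R i 0 k * (-w0/a) + R i 1 k * (g0/a) = phi i 1 k"
        by (rule lin2'[OF an]) (simp add: R_def a_def algebra_simps)
      then show ?thesis unfolding j L2v by (simp add: algebra_simps)
    qed
    have "loc_apply L1 L2 L3 Phi1 i j k = L2 j 0 * (U i 0 0 * L3 k 0 + U i 0 1 * L3 k 1)
       + L2 j 1 * (U i 1 0 * L3 k 0 + U i 1 1 * L3 k 1)"
      by (simp add: loc_Phi1 l1 u10 algebra_simps)
    then show ?thesis using s1 s2 by simp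
  qed
  then show ?thesis unfolding slocc_le_def by blast
qed


lemma kernel: fixes phi :: state shows "\<exists>p00 p01 p10 p11::complex. (p00 \<noteq> 0 \<or> p01 \<noteq> 0 \<or> p10 \<noteq> 0 \<or> p11 \<noteq> 0) \<and>
   (\<forall>i. p00*phi i 0 1 + p01*phi i 1 1 = p10*phi i 0 0 + p11*phi i 1 0)"
proof -
  define cf where "cf = (\<lambda>(i::3) (c::4). if c = 1 then phi i 0 1 else if c = 2 then phi i 1 1
      else if c = 3 then - phi i 0 0 else - phi i 1 0)"
  define M :: "complex^4^4" where "M = (\<chi> r c. if r = 1 then cf 0 c else if r = 2 then cf 1 c
      else if r = 3 then cf 2 c else 0)"
  have "row 4 M = 0" by (simp add: M_def row_def vec_eq_iff)
  then have "det M = 0" by (rule det_zero_row(2))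
  then have "\<not> invertible M" using invertible_det_nz by blast
  then obtain x where x: "M *v x = 0" "x \<noteq> 0"
    using invertible_left_inverse matrix_left_invertible_ker by metis
  have c: "(\<Sum>c\<in>UNIV. M$r$c * x$c) = 0" for r
    using x(1) by (simp add: matrix_vector_mult_def vec_eq_iff)
  have e: "cf i 1 * x$1 + cf i 2 * x$2 + cf i 3 * x$3 + cf i 4 * x$4 = 0" for i
  proof -
    have "i = 0 \<or> i = 1 \<or> i = 2" by (rule ex3)
    then show ?thesis
    proof (elim disjE)
      assume "i = 0" then show ?thesis using c[of 1] by (simp add: M_def sum_4)
    next
      assume "i = 1" then show ?thesis using c[of 2] by (simp add: M_def sum_4)
    next
      assume "i = 2" then show ?thesis using c[of 3] by (simp add: M_def sum_4)
    qed
  qed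
  have nz: "x$1 \<noteq> 0 \<or> x$2 \<noteq> 0 \<or> x$3 \<noteq> 0 \<or> x$4 \<noteq> 0"
    using x(2) by (simp add: vec_eq_iff forall_4)
  have "\<forall>i. x$1*phi i 0 1 + x$2*phi i 1 1 = x$3*phi i 0 0 + x$4*phi i 1 0"
  proof
    fix i
    show "x$1*phi i 0 1 + x$2*phi i 1 1 = x$3*phi i 0 0 + x$4*phi i 1 0"
      using e[of i] by (simp add: cf_def algebra_simps)
  qed
  then show ?thesis using nz by blast
qed

lemma le_Phi1:
  fixes w0 w1 v0 v1 :: complex
  assumes w: "w0 \<noteq> 0 \<or> w1 \<noteq> 0" and v: "v0 \<noteq> 0 \<or> v1 \<noteq> 0"
    and orth: "\<And>i. w0*(phi i 0 0 * v0 + phi i 0 1 * v1) + w1*(phi i 1 0 * v0 + phi i 1 1 * v1) = 0"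
  shows "slocc_le phi Phi1"
proof -
  obtain g0 g1 where g: "g0*w1 - g1*w0 \<noteq> 0"
  proof (cases "w0 = 0")
    case True then show ?thesis by (intro that[of 1 0]) (use w in simp)
  next
    case False then show ?thesis by (intro that[of 0 1]) simp
  qed
  obtain h0 h1 where h: "v0*h1 - v1*h0 \<noteq> 0"
  proof (cases "v0 = 0")
    case True then show ?thesis by (intro that[of 0 1]) (use v in simp)
  next
    case False then show ?thesis by (intro that[of 1 0]) simp
  qed
  show ?thesis by (rule le_Phi1_gen[OF g h orth])
qed

lemma le_some: "slocc_le phi Phi1 \<or> slocc_le phi Phi2"
proof -
  obtain p00 p01 p10 p11 :: complex where nz: "p00 \<noteq> 0 \<or> p01 \<noteq> 0 \<or> p10 \<noteq> 0 \<or> p11 \<noteq> 0"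
    and sym: "\<And>i. p00*phi i 0 1 + p01*phi i 1 1 = p10*phi i 0 0 + p11*phi i 1 0"
    using kernel[of phi] by blast
  show ?thesis
  proof (cases "p00*p11 - p01*p10 = 0")
    case False
    have "slocc_le phi Phi2" by (rule le_Phi2, use False in simp, rule sym)
    then show ?thesis ..
  next
    case det: True
    show ?thesis
    proof (cases "p00 = 0 \<and> p01 = 0")
      case True
      have "slocc_le phi Phi1"
      proof (rule le_Phi1[of p10 p11 1 0])
        show "p10 \<noteq> 0 \<or> p11 \<noteq> 0" using nz True by auto
        show "(1::complex) \<noteq> 0 \<or> (0::complex) \<noteq> 0" by simp
        fix i show "p10 * (phi i 0 0 * 1 + phi i 0 1 * 0) + p11 * (phi i 1 0 * 1 + phi i 1 1 * 0) = 0"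
          using sym[of i] True by simp
      qed
      then show ?thesis ..
    next
      case False
      define lam where "lam = (if p00 \<noteq> 0 then p10/p00 else p11/p01)"
      have "slocc_le phi Phi1"
      proof (rule le_Phi1[of p00 p01 "-lam" 1])
        show "p00 \<noteq> 0 \<or> p01 \<noteq> 0" using False by auto
        show "-lam \<noteq> 0 \<or> (1::complex) \<noteq> 0" by simp
        fix i
        show "p00 * (phi i 0 0 * -lam + phi i 0 1 * 1) + p01 * (phi i 1 0 * -lam + phi i 1 1 * 1) = 0"
        proof (cases "p00 = 0")
          case z: True
          then have "p01 \<noteq> 0" using False by auto
          moreover have "p10 = 0" using det z \<open>p01 \<noteq> 0\<close> by simp
          ultimately show ?thesis using sym[of i] z unfolding lam_def by (simp add: field_simps)
        next
          case nz0: False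
          have l: "lam = p10/p00" unfolding lam_def using nz0 by simp
          have "p00 * (p00 * (phi i 0 0 * -lam + phi i 0 1 * 1) + p01 * (phi i 1 0 * -lam + phi i 1 1 * 1))
            = phi i 1 0 * (p00*p11 - p01*p10) + p00 * ((p00*phi i 0 1 + p01*phi i 1 1) - (p10*phi i 0 0 + p11*phi i 1 0))"
            unfolding l using nz0 by (simp add: field_simps)
          also have "\<dots> = 0" using det sym[of i] by simp
          finally show ?thesis using nz0 by simp
        qed
      qed
      then show ?thesis ..
    qed
  qed
qed

theorem mainTheorem7:
  shows "slocc_maximal Phi1 \<and> slocc_maximal Phi2 \<and> \<not> slocc_equiv Phi1 Phi2 \<and>
         (\<forall>phi. slocc_maximal phi \<longrightarrow> slocc_equiv phi Phi1 \<or> slocc_equiv phi Phi2)"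
proof (intro conjI allI impI)
  show "slocc_maximal Phi1" unfolding slocc_maximal_def
  proof (intro allI impI)
    fix psi assume h: "slocc_le Phi1 psi"
    from le_some[of psi] show "slocc_le psi Phi1"
    proof
      assume "slocc_le psi Phi2"
      with h have "slocc_le Phi1 Phi2" by (rule trans_le)
      with not_Phi1_le_Phi2 show ?thesis by blast
    qed
  qed
  show "slocc_maximal Phi2" unfolding slocc_maximal_def
  proof (intro allI impI)
    fix psi assume h: "slocc_le Phi2 psi"
    from le_some[of psi] show "slocc_le psi Phi2"
    proof
      assume "slocc_le psi Phi1"
      with h have "slocc_le Phi2 Phi1" by (rule trans_le)
      with not_Phi2_le_Phi1 show ?thesis by blast
    qed
  qed
  show "\<not> slocc_equiv Phi1 Phi2" unfolding slocc_equiv_def using not_Phi1_le_Phi2 by blast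
  fix phi assume m: "slocc_maximal phi"
  from le_some[of phi] show "slocc_equiv phi Phi1 \<or> slocc_equiv phi Phi2"
    using m unfolding slocc_maximal_def slocc_equiv_def by blast
qed
end
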